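(* Let $(\mathfrak g,[\cdot,\cdot],[\![\cdot,\cdot,\cdot]\!];\omega)$ be a symplectic Lie-Yamaguti algebra and let $( *,\{\cdot,\cdot,\cdot\})$ be the compatible pre-Lie-Yamaguti algebra structure on $\mathfrak g$ determined by $\omega(x*y,z)=-\omega(y,[x,z])$ and $\omega(\{x,y,z\},w)=\omega(x,[\![w,z,y]\!])$. Then $\omega(\{x,y,z\}_D,w)=-\omega(z,[\![x,y,w]\!])$ for all $x,y,z,w\in\mathfrak g$.
   Context: All vector spaces are over a field of characteristic $0$. A Lie-Yamaguti algebra is a vector space $\mathfrak g$ with a bilinear skew-symmetric $[\cdot,\cdot]$ and a trilinear $[\![\cdot,\cdot,\cdot]\!]$ skew-symmetric in its first two arguments such that for all $x,y,z,w,t$: (1) $[[x,y],z]+[[y,z],x]+[[z,x],y]+[\![x,y,z]\!]+[\![y,z,x]\!]+[\![z,x,y]\!]=0$; (2) $[\![[x,y],z,w]\!]+[\![[y,z],x,w]\!]+[\![[z,x],y,w]\!]=0$; (3) $[\![x,y,[z,w]]\!]=[[\![x,y,z]\!],w]+[z,[\![x,y,w]\!]]$; (4) $[\![x,y,[\![z,w,t]\!]]\!]=[\![[\![x,y,z]\!],w,t]\!]+[\![z,[\![x,y,w]\!],t]\!]+[\![z,w,[\![x,y,t]\!]]\!]$. A symplectic Lie-Yamaguti algebra is one equipped with a nondegenerate skew-symmetric bilinear form $\omega$ such that for all $x,y,z,w$: $\omega(x,[y,z])+\omega(y,[z,x])+\omega(z,[x,y])=0$ and $\omega(z,[\![x,y,w]\!])-\omega(x,[\![w,z,y]\!])+\omega(y,[\![w,z,x]\!])-\omega(w,[\![x,y,z]\!])=0$.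 For operations $*$ and $\{\cdot,\cdot,\cdot\}$ on $\mathfrak g$, $(x,y,z):=(x*y)*z-x*(y*z)$ and $\{x,y,z\}_D:=\{z,y,x\}-\{z,x,y\}+(y,x,z)-(x,y,z)$. (That the operations defined by the two displayed formulas form a pre-Lie-Yamaguti algebra compatible with $\mathfrak g$ is part of the setting.) *)

theory Defs
  imports Main "HOL.Vector_Spaces"
begin

definition bilinear_op :: "('k::field \<Rightarrow> 'v::ab_group_add \<Rightarrow> 'v) \<Rightarrow> ('v \<Rightarrow> 'v \<Rightarrow> 'v) \<Rightarrow> bool" where
  "bilinear_op scale f \<longleftrightarrow>
     (\<forall>y. Vector_Spaces.linear scale scale (\<lambda>x. f x y)) \<and> (\<forall>x. Vector_Spaces.linear scale scale (\<lambda>y. f x y))"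

definition trilinear_op :: "('k::field \<Rightarrow> 'v::ab_group_add \<Rightarrow> 'v) \<Rightarrow> ('v \<Rightarrow> 'v \<Rightarrow> 'v \<Rightarrow> 'v) \<Rightarrow> bool" where
  "trilinear_op scale f \<longleftrightarrow>
     (\<forall>y z. Vector_Spaces.linear scale scale (\<lambda>x. f x y z)) \<and> (\<forall>x z. Vector_Spaces.linear scale scale (\<lambda>y. f x y z))
     \<and> (\<forall>x y. Vector_Spaces.linear scale scale (\<lambda>z. f x y z))"

definition bilinear_form :: "('k::field \<Rightarrow> 'v::ab_group_add \<Rightarrow> 'v) \<Rightarrow> ('v \<Rightarrow> 'v \<Rightarrow> 'k) \<Rightarrow> bool" where
  "bilinear_form scale \<omega> \<longleftrightarrow>
     (\<forall>y. Vector_Spaces.linear scale (*) (\<lambda>x. \<omega> x y)) \<and> (\<forall>x. Vector_Spaces.linear scale (*) (\<lambda>y. \<omega> x y))"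

definition lie_yamaguti ::
  "('k::field \<Rightarrow> 'v::ab_group_add \<Rightarrow> 'v) \<Rightarrow> ('v \<Rightarrow> 'v \<Rightarrow> 'v) \<Rightarrow> ('v \<Rightarrow> 'v \<Rightarrow> 'v \<Rightarrow> 'v) \<Rightarrow> bool" where
  "lie_yamaguti scale br tr \<longleftrightarrow>
     vector_space scale \<and> bilinear_op scale br \<and> trilinear_op scale tr \<and>
     (\<forall>x y. br x y = - br y x) \<and>
     (\<forall>x y z. tr x y z = - tr y x z) \<and>
     (\<forall>x y z. br (br x y) z + br (br y z) x + br (br z x) y
               + tr x y z + tr y z x + tr z x y = 0) \<and>
     (\<forall>x y z w. tr (br x y) z w + tr (br y z) x w + tr (br z x) y w = 0) \<and>
     (\<forall>x y z w. tr x y (br z w) = br (tr x y z) w + br z (tr x y w)) \<and>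
     (\<forall>x y z w t. tr x y (tr z w t) = tr (tr x y z) w t + tr z (tr x y w) t + tr z w (tr x y t))"

definition symplectic_lie_yamaguti ::
  "('k::field \<Rightarrow> 'v::ab_group_add \<Rightarrow> 'v) \<Rightarrow> ('v \<Rightarrow> 'v \<Rightarrow> 'v) \<Rightarrow> ('v \<Rightarrow> 'v \<Rightarrow> 'v \<Rightarrow> 'v)
    \<Rightarrow> ('v \<Rightarrow> 'v \<Rightarrow> 'k) \<Rightarrow> bool" where
  "symplectic_lie_yamaguti scale br tr \<omega> \<longleftrightarrow>
     lie_yamaguti scale br tr \<and> bilinear_form scale \<omega> \<and>
     (\<forall>x y. \<omega> x y = - \<omega> y x) \<and>
     (\<forall>x. (\<forall>y. \<omega> x y = 0) \<longrightarrow> x = 0) \<and>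
     (\<forall>x y z. \<omega> x (br y z) + \<omega> y (br z x) + \<omega> z (br x y) = 0) \<and>
     (\<forall>x y z w. \<omega> z (tr x y w) - \<omega> x (tr w z y) + \<omega> y (tr w z x) - \<omega> w (tr x y z) = 0)"

definition assoc :: "('v::ab_group_add \<Rightarrow> 'v \<Rightarrow> 'v) \<Rightarrow> 'v \<Rightarrow> 'v \<Rightarrow> 'v \<Rightarrow> 'v" where
  "assoc m x y z = m (m x y) z - m x (m y z)"

definition sub_D :: "('v::ab_group_add \<Rightarrow> 'v \<Rightarrow> 'v) \<Rightarrow> ('v \<Rightarrow> 'v \<Rightarrow> 'v \<Rightarrow> 'v) \<Rightarrow> 'v \<Rightarrow> 'v \<Rightarrow> 'v \<Rightarrow> 'v" where
  "sub_D m br3 x y z = br3 z y x - br3 z x y + assoc m y x z - assoc m x y z"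

end

theory Submission
  imports Defs
begin

theorem corollary4p5:
  fixes scale :: "'k::field_char_0 \<Rightarrow> 'v::ab_group_add \<Rightarrow> 'v"
    and br :: "'v \<Rightarrow> 'v \<Rightarrow> 'v" and tr :: "'v \<Rightarrow> 'v \<Rightarrow> 'v \<Rightarrow> 'v"
    and \<omega> :: "'v \<Rightarrow> 'v \<Rightarrow> 'k"
    and m :: "'v \<Rightarrow> 'v \<Rightarrow> 'v" and cb :: "'v \<Rightarrow> 'v \<Rightarrow> 'v \<Rightarrow> 'v"
  assumes "symplectic_lie_yamaguti scale br tr \<omega>"
    and "\<And>x y z. \<omega> (m x y) z = - \<omega> y (br x z)"
    and "\<And>x y z w. \<omega> (cb x y z) w = \<omega> x (tr w z y)"
  shows "\<forall>x y z w. \<omega> (sub_D m cb x y z) w = - \<omega> z (tr x y w)"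
proof -
  note S1 = assms(1)[unfolded symplectic_lie_yamaguti_def, THEN conjunct1] and S2 = assms(1)[unfolded symplectic_lie_yamaguti_def, THEN conjunct2, THEN conjunct1]
  note S3 = assms(1)[unfolded symplectic_lie_yamaguti_def, THEN conjunct2, THEN conjunct2, THEN conjunct1, rule_format] and S4 = assms(1)[unfolded symplectic_lie_yamaguti_def, THEN conjunct2, THEN conjunct2, THEN conjunct2, THEN conjunct1, rule_format]
    and S5 = assms(1)[unfolded symplectic_lie_yamaguti_def, THEN conjunct2, THEN conjunct2, THEN conjunct2, THEN conjunct2, THEN conjunct1, rule_format]
  note S = S1 S2 S3 S4 S5
  note BL = S1[unfolded lie_yamaguti_def, THEN conjunct2, THEN conjunct1]
  note L1 = S1[unfolded lie_yamaguti_def, THEN conjunct2, THEN conjunct2, THEN conjunct2, THEN conjunct1, rule_format] and L2 = S1[unfolded lie_yamaguti_def, THEN conjunct2, THEN conjunct2, THEN conjunct2, THEN conjunct2, THEN conjunct1, rule_format]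
    and L3 = S1[unfolded lie_yamaguti_def, THEN conjunct2, THEN conjunct2, THEN conjunct2, THEN conjunct2, THEN conjunct2, THEN conjunct1, rule_format]
  note L = L1 L2 L3
  have badd: "\<And>a b c. br (a + b) c = br a c + br b c"
    using BL unfolding bilinear_op_def by (metis linear.axioms(3) module_hom.add)
  have badd2: "\<And>a b c. br c (a + b) = br c a + br c b"
    using BL unfolding bilinear_op_def by (metis linear.axioms(3) module_hom.add)
  have bneg2: "br c (- a) = - br c a" for a c
  proof -
    have z: "br c 0 = 0" using badd2[where a=0 and b=0 and c=c] by simp
    have "br c (- a + a) = br c (- a) + br c a" by (rule badd2)
    then show ?thesis using z by (simp add: eq_neg_iff_add_eq_0)
  qed
  have add1: "\<And>a b c. \<omega> (a + b) c = \<omega> a c + \<omega> b c"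
    using S(2) unfolding bilinear_form_def by (metis linear.axioms(3) module_hom.add)
  have add2: "\<And>a b c. \<omega> c (a + b) = \<omega> c a + \<omega> c b"
    using S(2) unfolding bilinear_form_def by (metis linear.axioms(3) module_hom.add)
  have diff1: "\<omega> (a - b) c = \<omega> a c - \<omega> b c" for a b c
    using add1[where a="a - b" and b=b and c=c] by (simp add: algebra_simps)
  have diff2: "\<omega> c (a - b) = \<omega> c a - \<omega> c b" for a b c
    using add2[where a="a - b" and b=b and c=c] by (simp add: algebra_simps)
  have neg2: "\<omega> c (- a) = - \<omega> c a" for a c
    using diff2[of c 0 a] add2[where a=0 and b=0 and c=c] by simp
  have comm: "m x y - m y x = br x y" for x y
  proof -
    have "\<forall>z. \<omega> (m x y - m y x - br x y) z = 0"
    proof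
      fix z
      have "\<omega> (m x y - m y x - br x y) z = - \<omega> y (br x z) + \<omega> x (br y z) - \<omega> (br x y) z"
        by (simp add: diff1 assms(2))
      also have "\<dots> = 0"
        using S(5)[of x y z] S(3)[of "br x y" z] S(3)[of y "br x z"] L(1)[of x z] neg2[of y "br z x"]
        by (simp add: algebra_simps)
      finally show "\<omega> (m x y - m y x - br x y) z = 0" .
    qed
    then have "m x y - m y x - br x y = 0" using S4 by blast
    then show ?thesis by simp
  qed
  show ?thesis
  proof (intro allI)
    fix x y z w
    have e1: "\<omega> (assoc m x y z) w = - \<omega> z (br (m x y) w) - \<omega> z (br y (br x w))" for x y
      unfolding assoc_def diff1 assms(2)
      using S(3)[of "m y z" "br x w"] assms(2)[of y z "br x w"] by simp
    have "\<omega> (sub_D m cb x y z) w = \<omega> z (tr w x y) - \<omega> z (tr w y x)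
       + \<omega> z (br (m x y) w - br (m y x) w) - \<omega> z (br x (br y w)) + \<omega> z (br y (br x w))"
      unfolding sub_D_def diff1 add1 e1 assms(3) diff2 by (simp add: algebra_simps)
    also have "br (m x y) w - br (m y x) w = br (br x y) w"
      using badd[where a="m x y - m y x" and b="m y x" and c=w] comm[of x y] by (simp add: algebra_simps)
    also have "\<omega> z (tr w x y) - \<omega> z (tr w y x) + \<omega> z (br (br x y) w) - \<omega> z (br x (br y w))
        + \<omega> z (br y (br x w)) = \<omega> z (tr w x y - tr w y x + br (br x y) w - br x (br y w) + br y (br x w))"
      by (simp add: diff2 add2)
    also have "tr w x y - tr w y x + br (br x y) w - br x (br y w) + br y (br x w) = - tr x y w"
    proof -
      have f1: "br (br y w) x = - br x (br y w)" using L(1) by blast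
      have f2: "br (br w x) y = br y (br x w)"
        using L(1)[of "br w x" y] L(1)[of w x] bneg2[of y "br x w"] by simp
      have f3: "tr y w x = - tr w y x" using L(2) by blast
      have "br (br x y) w + - br x (br y w) + br y (br x w) + tr x y w + - tr w y x + tr w x y = 0"
        using L(3)[of x y w] unfolding f1 f2 f3 .
      then show ?thesis by (simp add: algebra_simps eq_neg_iff_add_eq_0)
    qed
    finally show "\<omega> (sub_D m cb x y z) w = - \<omega> z (tr x y w)"
      by (simp add: neg2)
  qed
qed

end
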